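(* Let $n\ge 6$ be divisible by $6$, let $C_n$ be the cycle on $n$ vertices, let $\widehat{C}_n$ be obtained from $C_n$ by attaching a distinct new pendant vertex (leaf) to every vertex of $C_n$, and let $H_n$ be obtained from $\widehat{C}_n$ by replacing every such leaf by a copy of the subdivided $K_4$, i.e. identifying each leaf with the subdivision vertex of a new copy of the subdivided $K_4$. Then $\dfrac{Z(H_n)}{|V(H_n)|}\ge \dfrac{5}{12}$.
   Context: Zero forcing: given a graph and a set $S$ of vertices initially colored black (all others white), repeatedly apply the rule: if a black vertex $v$ has exactly one white neighbor $u$, then $u$ becomes black. $S$ is a zero forcing set if eventually every vertex becomes black. $Z(G)$ is the minimum size of a zero forcing set of $G$. Subdivided $K_4$: the complete graph on 4 vertices $a,b,c,e$ with the edge $ab$ subdivided by a new vertex $s$ (5 vertices, edges $as, sb, ac, ae, bc, be, ce$); $s$ is its subdivision vertex. *)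

theory Defs
  imports Complex_Main
begin

text \<open>One round of zero forcing: every black vertex v with exactly one white
neighbour u forces u to become black (all such forces applied simultaneously;
this yields the same final colouring as applying them one at a time).\<close>
definition zf_step :: "'a set \<Rightarrow> ('a \<Rightarrow> 'a \<Rightarrow> bool) \<Rightarrow> 'a set \<Rightarrow> 'a set" where
  "zf_step V E B = B \<union> {u \<in> V. u \<notin> B \<and> (\<exists>v \<in> B. E v u \<and>
       (\<forall>w \<in> V. E v w \<and> w \<notin> B \<longrightarrow> w = u))}"

definition zero_forcing_set :: "'a set \<Rightarrow> ('a \<Rightarrow> 'a \<Rightarrow> bool) \<Rightarrow> 'a set \<Rightarrow> bool" where
  "zero_forcing_set V E S \<longleftrightarrow> S \<subseteq> V \<and> (\<exists>k. (zf_step V E ^^ k) S = V)"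

definition zero_forcing_number :: "'a set \<Rightarrow> ('a \<Rightarrow> 'a \<Rightarrow> bool) \<Rightarrow> nat" where
  "zero_forcing_number V E = Min (card ` {S. zero_forcing_set V E S})"

text \<open>Vertex (i,0) is the i-th cycle vertex (i < n); (i,k) for
k = 1..5 are the vertices s,a,b,c,e of the i-th copy of the subdivided K4, where
s = (i,1) is the subdivision vertex identified with the leaf attached to (i,0).\<close>
definition H_V :: "nat \<Rightarrow> (nat \<times> nat) set" where
  "H_V n = {0..<n} \<times> {0..5}"

definition H_E0 :: "nat \<Rightarrow> nat \<times> nat \<Rightarrow> nat \<times> nat \<Rightarrow> bool" where
  "H_E0 n x y = (case x of (i,k) \<Rightarrow> case y of (j,l) \<Rightarrow>
     i < n \<and> j < n \<and>
     ((k = 0 \<and> l = 0 \<and> j = (i + 1) mod n) \<or>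
      (i = j \<and> (k,l) \<in> {(0,1), (1,2), (1,3), (2,4), (2,5), (3,4), (3,5), (4,5)})))"

definition H_E :: "nat \<Rightarrow> nat \<times> nat \<Rightarrow> nat \<times> nat \<Rightarrow> bool" where
  "H_E n x y \<longleftrightarrow> H_E0 n x y \<or> H_E0 n y x"

end

theory Submission imports Defs begin

lemma zf_mono: "B \<subseteq> zf_step V E B" by (auto simp: zf_step_def)

lemma zf_sub: "B \<subseteq> V \<Longrightarrow> zf_step V E B \<subseteq> V" by (auto simp: zf_step_def)

lemma witness_gen:
  assumes "zero_forcing_set V E S"
  shows "\<exists>\<tau>::'a\<Rightarrow>nat. \<forall>x\<in>V-S. \<exists>w\<in>V. E w x \<and> \<tau> w < \<tau> x \<and> (\<forall>y\<in>V. E w y \<and> y\<noteq>x \<longrightarrow> \<tau> y < \<tau> x)"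
proof -
  define B where "B t = (zf_step V E ^^ t) S" for t
  from assms obtain k where SV: "S \<subseteq> V" and Bk: "B k = V" by (auto simp: zero_forcing_set_def B_def)
  have BS: "B (Suc t) = zf_step V E (B t)" for t by (simp add: B_def)
  have B0: "B 0 = S" by (simp add: B_def)
  have BV: "B t \<subseteq> V" for t by (induction t) (auto simp: B0 SV BS intro!: zf_sub)
  have mono: "s \<le> t \<Longrightarrow> B s \<subseteq> B t" for s t
    using lift_Suc_mono_le[of B s t] zf_mono BS by (metis)
  define \<tau> where "\<tau> x = (LEAST t. x \<in> B t)" for x
  have inB: "x \<in> V \<Longrightarrow> x \<in> B (\<tau> x)" for x unfolding \<tau>_def using Bk by (metis LeastI)
  have le: "x \<in> B t \<Longrightarrow> \<tau> x \<le> t" for x t unfolding \<tau>_def by (rule Least_le)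
  show ?thesis
  proof (intro exI ballI)
    fix x assume x: "x \<in> V - S"
    have "\<tau> x \<noteq> 0" using inB[of x] x B0 by (metis DiffD1 DiffD2)
    then obtain t where t: "\<tau> x = Suc t" using not0_implies_Suc by blast
    have nt: "x \<notin> B t" using le[of x t] t by auto
    have "x \<in> zf_step V E (B t)" using inB[of x] x t BS by auto
    then obtain v where v: "v \<in> B t" "E v x" and all: "\<forall>w\<in>V. E v w \<and> w \<notin> B t \<longrightarrow> w = x"
      using nt by (auto simp: zf_step_def)
    show "\<exists>w\<in>V. E w x \<and> \<tau> w < \<tau> x \<and> (\<forall>y\<in>V. E w y \<and> y\<noteq>x \<longrightarrow> \<tau> y < \<tau> x)"
    proof (intro bexI conjI ballI impI)
      show "v \<in> V" using v BV by auto
      show "E v x" by fact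
      show "\<tau> v < \<tau> x" using le[OF v(1)] t by auto
      fix y assume "y \<in> V" "E v y \<and> y \<noteq> x"
      then have "y \<in> B t" using all by auto
      then show "\<tau> y < \<tau> x" using le t by fastforce
    qed
  qed
qed

definition nb :: "nat \<Rightarrow> nat\<times>nat \<Rightarrow> (nat\<times>nat) set" where
 "nb n x = (case x of (i,k) \<Rightarrow> if k=0 then {((i+1) mod n,0), ((i+n-1) mod n,0),(i,1)}
   else if k=1 then {(i,0),(i,2),(i,3)} else if k \<le> 3 then {(i,1),(i,4),(i,5)}
   else if k=4 then {(i,2),(i,3),(i,5)} else {(i,2),(i,3),(i,4)})"

lemma cyc: "(i::nat)<n \<Longrightarrow> j<n \<Longrightarrow> (i = (j+1) mod n) \<longleftrightarrow> (j = (i+n-1) mod n)"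
proof -
  assume a: "i<n" "j<n"
  have m1: "(i+n-1) mod n = (if i = 0 then n - 1 else i - 1)"
  proof (cases "i=0")
    case False
    then have e: "i+n-1 = (i-1) + n" by auto
    have "((i-1) + n) mod n = i - 1" using a by simp
    then show ?thesis using False e by simp
  qed (use a in auto)
  have m2: "(j+1) mod n = (if j+1 = n then 0 else j+1)"
    using a by (auto simp: mod_if)
  show ?thesis unfolding m1 m2 using a by auto
qed

lemma HE_nb: assumes "n\<ge>3" "x \<in> H_V n" shows "H_E n x y \<longleftrightarrow> y \<in> nb n x"
proof -
  obtain i k where x: "x = (i,k)" "i<n" "k\<le>5" using assms by (auto simp: H_V_def)
  obtain j l where y: "y = (j,l)" by fastforce
  show ?thesis using cyc[of i n j] assms(1) x y
    by (auto simp: H_E_def H_E0_def nb_def)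
qed


lemma nb_V: "n>0 \<Longrightarrow> x \<in> H_V n \<Longrightarrow> nb n x \<subseteq> H_V n"
  by (auto simp: nb_def H_V_def split: prod.splits)

lemma nb_sym: "n\<ge>3 \<Longrightarrow> x \<in> H_V n \<Longrightarrow> y \<in> H_V n \<Longrightarrow> y \<in> nb n x \<Longrightarrow> x \<in> nb n y"
  using HE_nb by (metis H_E_def)

context
  fixes n :: nat and S :: "(nat\<times>nat) set" and \<tau> :: "nat\<times>nat \<Rightarrow> nat" and i :: nat
  assumes n3: "n\<ge>3" and i: "i<n"
  and W: "\<And>x. x\<in>H_V n \<Longrightarrow> x\<notin>S \<Longrightarrow> \<exists>w\<in>nb n x. \<tau> w<\<tau> x \<and> (\<forall>y\<in>nb n w. y\<noteq>x \<longrightarrow> \<tau> y<\<tau> x)"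
begin

lemma Wk: "k \<le> 5 \<Longrightarrow> (i,k)\<notin>S \<Longrightarrow> \<exists>w\<in>nb n (i,k). \<tau> w<\<tau> (i,k) \<and> (\<forall>y\<in>nb n w. y\<noteq>(i,k) \<longrightarrow> \<tau> y<\<tau> (i,k))"
  using W[of "(i,k)"] i by (auto simp: H_V_def)

lemma L1: "(i,2)\<in>S \<or> (i,3)\<in>S"
proof (rule ccontr)
  assume "\<not> ?thesis"
  then have a: "(i,2)\<notin>S" "(i,3)\<notin>S" by auto
  from Wk[of 2] a Wk[of 3] show False by (auto simp: nb_def)
qed

lemma L2: "(i,4)\<in>S \<or> (i,5)\<in>S"
proof (rule ccontr)
  assume "\<not> ?thesis"
  then have a: "(i,4)\<notin>S" "(i,5)\<notin>S" by auto
  from Wk[of 4] a Wk[of 5] show False by (auto simp: nb_def)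
qed

lemma L3:
  assumes "(i,1)\<notin>S" "\<not>((i,2)\<in>S \<and> (i,3)\<in>S)" "\<not>((i,4)\<in>S \<and> (i,5)\<in>S)"
  shows "\<tau> (i,0) < \<tau> (i,1) \<and> (\<forall>y\<in>nb n (i,0). y\<noteq>(i,1) \<longrightarrow> \<tau> y<\<tau> (i,1))"
proof -
  obtain w where w: "w\<in>nb n (i,1)" "\<tau> w<\<tau> (i,1)" "\<forall>y\<in>nb n w. y\<noteq>(i,1) \<longrightarrow> \<tau> y<\<tau> (i,1)"
    using Wk[of 1] assms by auto
  have "w = (i,0)"
  proof (rule ccontr)
    assume "w \<noteq> (i,0)"
    then have "w = (i,2) \<or> w = (i,3)" using w by (auto simp: nb_def)
    then show False
      using w assms L1 L2 Wk[of 2] Wk[of 3] Wk[of 4] Wk[of 5] by (auto simp: nb_def)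
  qed
  then show ?thesis using w by auto
qed

end

lemma bound:
  assumes n3: "n\<ge>3" and zfs: "zero_forcing_set (H_V n) (H_E n) S"
  shows "5*n \<le> 2 * card S"
proof -
  have n0: "n>0" using n3 by auto
  have SV: "S \<subseteq> H_V n" using zfs by (auto simp: zero_forcing_set_def)
  obtain \<tau> :: "nat\<times>nat \<Rightarrow> nat" where t: "\<forall>x\<in>H_V n-S. \<exists>w\<in>H_V n. H_E n w x \<and> \<tau> w < \<tau> x \<and>
      (\<forall>y\<in>H_V n. H_E n w y \<and> y\<noteq>x \<longrightarrow> \<tau> y < \<tau> x)"
    using witness_gen[OF zfs] by blast
  have W: "\<exists>w\<in>nb n x. \<tau> w<\<tau> x \<and> (\<forall>y\<in>nb n w. y\<noteq>x \<longrightarrow> \<tau> y<\<tau> x)"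
    if x: "x\<in>H_V n" "x\<notin>S" for x
  proof -
    obtain w where w: "w\<in>H_V n" "H_E n w x" "\<tau> w < \<tau> x"
      "\<forall>y\<in>H_V n. H_E n w y \<and> y\<noteq>x \<longrightarrow> \<tau> y < \<tau> x" using t x by blast
    have "w \<in> nb n x" using w(1,2) HE_nb[OF n3 x(1)] unfolding H_E_def by blast
    moreover have "\<forall>y\<in>nb n w. y\<noteq>x \<longrightarrow> \<tau> y<\<tau> x"
      using w(4) HE_nb[OF n3 w(1)] nb_V[OF n0 w(1)] by blast
    ultimately show ?thesis using w(3) by blast
  qed
  define D where "D = {i\<in>{..<n}. (i,0)\<notin>S \<and> (i,1)\<notin>S \<and> \<not>((i,2)\<in>S \<and> (i,3)\<in>S) \<and> \<not>((i,4)\<in>S \<and> (i,5)\<in>S)}"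
  define Q where "Q i = S \<inter> ({i}\<times>{0..5})" for i :: nat
  have L1: "(i,2)\<in>S \<or> (i,3)\<in>S" and L2: "(i,4)\<in>S \<or> (i,5)\<in>S" if "i<n" for i
    using L1[OF n3 that W] L2[OF n3 that W] by auto
  have L3: "\<tau> (i,0) < \<tau> (i,1) \<and> (\<forall>y\<in>nb n (i,0). y\<noteq>(i,1) \<longrightarrow> \<tau> y<\<tau> (i,1))" if "i\<in>D" for i
    using L3[OF n3 _ W, of i] that by (auto simp: D_def)
  have per: "card (Q i) + (if i\<in>D then 1 else 0) \<ge> 3" if i: "i<n" for i
  proof -
    have fQ: "finite (Q i)" unfolding Q_def by auto
    obtain x where x: "x\<in>{2,3}" "(i,x)\<in>S" using L1[OF i] by blast
    obtain y where y: "y\<in>{4,5}" "(i,y)\<in>S" using L2[OF i] by blast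
    show ?thesis
    proof (cases "i\<in>D")
      case True
      have "{(i,x),(i,y)} \<subseteq> Q i" using x y by (auto simp: Q_def)
      then have "card {(i,x),(i,y)} \<le> card (Q i)" using fQ card_mono by blast
      moreover have "card {(i,x),(i,y)} = 2" using x y by auto
      ultimately show ?thesis using True by simp
    next
      case False
      then obtain z where z: "z \<le> 5" "z\<noteq>x" "z\<noteq>y" "(i,z)\<in>S"
      proof -
        assume h: "\<And>z. z \<le> 5 \<Longrightarrow> z\<noteq>x \<Longrightarrow> z\<noteq>y \<Longrightarrow> (i,z)\<in>S \<Longrightarrow> thesis"
        have "(i,0)\<in>S \<or> (i,1)\<in>S \<or> ((i,2)\<in>S \<and> (i,3)\<in>S) \<or> ((i,4)\<in>S \<and> (i,5)\<in>S)"
          using False i by (auto simp: D_def)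
        then show thesis
        proof (elim disjE conjE)
          assume "(i,0)\<in>S" then show thesis using h[of 0] x y by auto
        next
          assume "(i,1)\<in>S" then show thesis using h[of 1] x y by auto
        next
          assume "(i,2)\<in>S" "(i,3)\<in>S" then show thesis using h[of 2] h[of 3] x y by auto
        next
          assume "(i,4)\<in>S" "(i,5)\<in>S" then show thesis using h[of 4] h[of 5] x y by auto
        qed
      qed
      have "{(i,x),(i,y),(i,z)} \<subseteq> Q i" using x y z by (auto simp: Q_def)
      then have "card {(i,x),(i,y),(i,z)} \<le> card (Q i)" using fQ card_mono by blast
      moreover have "card {(i,x),(i,y),(i,z)} = 3" using x y z by auto
      ultimately show ?thesis by simp
    qed
  qed
  have SU: "S = (\<Union>i\<in>{..<n}. Q i)" using SV by (auto simp: Q_def H_V_def)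
  have cS: "card S = (\<Sum>i<n. card (Q i))"
    unfolding SU by (rule card_UN_disjoint) (auto simp: Q_def)
  have DS: "D \<subseteq> {..<n}" by (auto simp: D_def)
  have cD: "card D = (\<Sum>i<n. (if i\<in>D then 1 else 0))"
  proof -
    have "card D = card ({..<n} \<inter> D)" using DS by (simp add: Int_absorb1)
    also have "\<dots> = (\<Sum>i\<in>{..<n} \<inter> D. 1)" by simp
    also have "\<dots> = (\<Sum>i<n. (if i\<in>D then 1 else 0))" by (rule sum.inter_restrict) simp
    finally show ?thesis .
  qed
  have "3*n \<le> (\<Sum>i<n. card (Q i) + (if i\<in>D then 1 else 0))"
    using sum_mono[of "{..<n}" "\<lambda>_. 3::nat" "\<lambda>i. card (Q i) + (if i\<in>D then 1 else 0)"] per by simp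
  then have A: "3*n \<le> card S + card D" unfolding cS cD sum.distrib .
  define P where "P i j \<longleftrightarrow> j<n \<and> (\<forall>y\<in>nb n (j,0). y\<noteq>(i,0) \<longrightarrow> \<tau> y<\<tau> (i,0)) \<and> (i,0)\<in>nb n (j,0)" for i j
  define f where "f i = (SOME j. P i j)" for i
  have Pf: "P i (f i)" if iD: "i\<in>D" for i
  proof -
    have i: "i<n" "(i,0)\<notin>S" using iD by (auto simp: D_def)
    have iV: "(i,0)\<in>H_V n" using i by (auto simp: H_V_def)
    obtain w where w: "w\<in>nb n (i,0)" "\<tau> w<\<tau> (i,0)" "\<forall>y\<in>nb n w. y\<noteq>(i,0) \<longrightarrow> \<tau> y<\<tau> (i,0)"
      using W[OF iV i(2)] by blast
    have "w \<noteq> (i,1)" using w(2) L3[OF iD] by auto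
    then obtain j where j: "w = (j,0)" "j<n" using w(1) n0 by (auto simp: nb_def)
    have wV: "w \<in> H_V n" using j by (auto simp: H_V_def)
    have "(i,0)\<in>nb n (j,0)" using nb_sym[OF n3 iV wV w(1)] j by simp
    then have "P i j" using w j by (auto simp: P_def)
    then show ?thesis unfolding f_def by (rule someI)
  qed
  have fD: "f i \<in> {..<n} - D" if iD: "i\<in>D" for i
  proof
    show "f i \<in> {..<n}" using Pf[OF iD] by (auto simp: P_def)
    show "f i \<notin> D"
    proof
      assume jD: "f i \<in> D"
      have "\<tau> (i,0) < \<tau> (f i,1)" using L3[OF jD] Pf[OF iD] by (auto simp: P_def)
      moreover have "(f i,1) \<in> nb n (f i,0)" by (simp add: nb_def)
      then have "\<tau> (f i,1) < \<tau> (i,0)" using Pf[OF iD] by (auto simp: P_def)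
      ultimately show False by simp
    qed
  qed
  have inj: "inj_on f D"
  proof
    fix i i' assume iD: "i\<in>D" and i'D: "i'\<in>D" and e: "f i = f i'"
    show "i = i'"
    proof (rule ccontr)
      assume ne: "i \<noteq> i'"
      have "\<tau> (i',0) < \<tau> (i,0)" using Pf[OF iD] Pf[OF i'D] e ne by (auto simp: P_def)
      moreover have "\<tau> (i,0) < \<tau> (i',0)" using Pf[OF iD] Pf[OF i'D] e ne by (auto simp: P_def)
      ultimately show False by simp
    qed
  qed
  have "card D \<le> card ({..<n} - D)"
    by (rule card_inj_on_le[OF inj]) (use fD in auto)
  also have "\<dots> = n - card D" using DS by (simp add: card_Diff_subset finite_subset)
  finally have "2 * card D \<le> n" by simp
  with A show ?thesis by simp
qed

theorem proposition2:
  fixes n :: nat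
  assumes "n \<ge> 6" and "6 dvd n"
  shows "real (zero_forcing_number (H_V n) (H_E n)) / real (card (H_V n)) \<ge> 5 / 12"
proof -
  let ?Z = "{S. zero_forcing_set (H_V n) (H_E n) S}"
  have fin: "finite (card ` ?Z)"
  proof (rule finite_subset)
    show "card ` ?Z \<subseteq> card ` Pow (H_V n)" by (auto simp: zero_forcing_set_def)
    show "finite (card ` Pow (H_V n))" by (simp add: H_V_def)
  qed
  have "H_V n \<in> ?Z" by (auto simp: zero_forcing_set_def intro: exI[of _ 0])
  then have ne: "card ` ?Z \<noteq> {}" by blast
  obtain S where S: "S \<in> ?Z" "zero_forcing_number (H_V n) (H_E n) = card S"
    using Min_in[OF fin ne] unfolding zero_forcing_number_def by auto
  have b: "5*n \<le> 2 * card S" using bound[of n S] assms S by auto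
  have cV: "card (H_V n) = n * 6" by (simp add: H_V_def card_cartesian_product)
  have "real (5*n) \<le> real (2 * card S)" using b by linarith
  then show ?thesis unfolding S(2) cV using assms(1) by (simp add: field_simps)
qed
end
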